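(* Let $\mu$ be a measure on $L_n$ and define $\tilde\mu(j)=\mu(j)+\mu(n+1-j)$ for $1\le j\le n$. Then $C^0_{\tilde\mu}\le C^0_\mu$ and $C_{\tilde\mu}\le C_\mu$.
   Context: $L_n$ is the path graph with vertices $\{1,\dots,n\}$ and edges $\{j,j+1\}$, with distance $|i-j|$. A measure on $L_n$ is a weight function $\mu:\{1,\dots,n\}\to(0,\infty)$, $\mu(A)=\sum_{v\in A}\mu(v)$. Closed balls: $B(x,r)=\{y:|x-y|\le r\}$. $C_\mu=\sup\{\mu(B(x,2k+1))/\mu(B(x,k)):1\le x\le n,\ k\ge0\}$ and $C^0_\mu=\max_x\mu(B(x,1))/\mu(x)$. *)

theory Defs
  imports Complex_Main
begin

text \<open>Path graph L_n on vertices {1..n}, graph distance |i - j|.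
  A measure is a positive weight function mu on {1..n}.\<close>

definition Lball :: "nat \<Rightarrow> nat \<Rightarrow> nat \<Rightarrow> nat set" where
  "Lball n x r = {y \<in> {1..n}. \<bar>int x - int y\<bar> \<le> int r}"

definition meas :: "(nat \<Rightarrow> real) \<Rightarrow> nat set \<Rightarrow> real" where
  "meas mu A = (\<Sum>v\<in>A. mu v)"

definition doubling_const :: "nat \<Rightarrow> (nat \<Rightarrow> real) \<Rightarrow> real" where
  "doubling_const n mu =
     Sup {meas mu (Lball n x (2*k+1)) / meas mu (Lball n x k) | x k. x \<in> {1..n}}"

definition local_const :: "nat \<Rightarrow> (nat \<Rightarrow> real) \<Rightarrow> real" where
  "local_const n mu = Max {meas mu (Lball n x 1) / mu x | x. x \<in> {1..n}}"

definition sym_measure :: "nat \<Rightarrow> (nat \<Rightarrow> real) \<Rightarrow> nat \<Rightarrow> real" where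
  "sym_measure n mu j = mu j + mu (n + 1 - j)"

end

theory Submission
  imports Defs
begin

lemma ball_refl_img:
  assumes "x \<in> {1..n}"
  shows "(\<lambda>j. n + 1 - j) ` Lball n x r = Lball n (n + 1 - x) r"
proof
  show "(\<lambda>j. n + 1 - j) ` Lball n x r \<subseteq> Lball n (n + 1 - x) r"
    using assms by (auto simp: Lball_def)
next
  show "Lball n (n + 1 - x) r \<subseteq> (\<lambda>j. n + 1 - j) ` Lball n x r"
  proof
    fix y assume y: "y \<in> Lball n (n + 1 - x) r"
    then have "n + 1 - y \<in> Lball n x r" using assms by (auto simp: Lball_def)
    moreover have "y = n + 1 - (n + 1 - y)" using y by (auto simp: Lball_def)
    ultimately show "y \<in> (\<lambda>j. n + 1 - j) ` Lball n x r" by blast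
  qed
qed

lemma meas_sym:
  assumes "x \<in> {1..n}"
  shows "meas (sym_measure n mu) (Lball n x r) = meas mu (Lball n x r) + meas mu (Lball n (n + 1 - x) r)"
proof -
  have inj: "inj_on (\<lambda>j. n + 1 - j) (Lball n x r)"
    by (auto simp: inj_on_def Lball_def)
  have "(\<Sum>j\<in>Lball n x r. mu (n + 1 - j)) = (\<Sum>j\<in>(\<lambda>j. n + 1 - j) ` Lball n x r. mu j)"
    using sum.reindex[OF inj, of mu] by simp
  also have "\<dots> = meas mu (Lball n (n + 1 - x) r)"
    using ball_refl_img[OF assms] by (simp add: meas_def)
  finally show ?thesis by (simp add: meas_def sym_measure_def sum.distrib)
qed

lemma mediant:
  fixes a b c d :: real
  assumes "c > 0" "d > 0"
  shows "(a + b) / (c + d) \<le> max (a / c) (b / d)"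
proof (cases "a / c \<le> b / d")
  case True
  then have "a * d \<le> b * c" using assms by (simp add: field_simps)
  then have "(a + b) / (c + d) \<le> b / d" using assms by (simp add: field_simps)
  then show ?thesis by simp
next
  case False
  then have "b * c \<le> a * d" using assms by (simp add: field_simps)
  then have "(a + b) / (c + d) \<le> a / c" using assms by (simp add: field_simps)
  then show ?thesis by simp
qed

lemma ball_mem: "x \<in> {1..n} \<Longrightarrow> x \<in> Lball n x r"
  by (auto simp: Lball_def)

lemma refl_mem: "(x::nat) \<in> {1..n} \<Longrightarrow> n + 1 - x \<in> {1..n}"
  unfolding atLeastAtMost_iff by arith

lemma meas_pos:
  assumes pos: "\<forall>j\<in>{1..n}. mu j > 0" and x: "x \<in> {1..n}"
  shows "meas mu (Lball n x r) \<ge> mu x" "meas mu (Lball n x r) > 0"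
proof -
  have fin: "finite (Lball n x r)" by (simp add: Lball_def)
  have sub: "Lball n x r \<subseteq> {1..n}" by (auto simp: Lball_def)
  have "mu x \<le> (\<Sum>v\<in>Lball n x r. mu v)"
    using member_le_sum[of x _ mu, OF ball_mem[OF x]] fin pos sub by (auto intro: less_imp_le)
  then show "meas mu (Lball n x r) \<ge> mu x" by (simp add: meas_def)
  then show "meas mu (Lball n x r) > 0" using pos x by force
qed

lemma meas_le_total:
  assumes pos: "\<forall>j\<in>{1..n}. mu j > 0"
  shows "meas mu (Lball n x r) \<le> meas mu {1..n}"
  unfolding meas_def
  by (rule sum_mono2) (use pos in \<open>auto simp: Lball_def intro: less_imp_le\<close>)

lemma sym_pos:
  assumes pos: "\<forall>j\<in>{1..n}. mu j > 0"
  shows "\<forall>j\<in>{1..n}. sym_measure n mu j > 0"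
  using pos refl_mem by (auto simp: sym_measure_def intro!: add_pos_pos)

theorem lemma3p1:
  fixes n :: nat and mu :: "nat \<Rightarrow> real"
  assumes "\<forall>j\<in>{1..n}. mu j > 0"
  shows "local_const n (sym_measure n mu) \<le> local_const n mu
       \<and> doubling_const n (sym_measure n mu) \<le> doubling_const n mu"
proof (cases "n = 0")
  case True
  then show ?thesis by (simp add: local_const_def doubling_const_def)
next
  case False
  note pos = assms
  let ?s = "sym_measure n mu"
  define S where "S = {meas mu (Lball n x 1) / mu x | x. x \<in> {1..n}}"
  have finS: "finite S" unfolding S_def
    using finite_image_set[of "\<lambda>x. x \<in> {1..n}" "\<lambda>x. meas mu (Lball n x 1) / mu x"] by simp
  have memS: "meas mu (Lball n x 1) / mu x \<in> S" if "x \<in> {1..n}" for x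
    using that unfolding S_def by blast
  have L: "local_const n ?s \<le> local_const n mu"
    unfolding local_const_def S_def[symmetric]
  proof (rule Max.boundedI)
    show "finite {meas ?s (Lball n x 1) / ?s x | x. x \<in> {1..n}}"
      using finite_image_set[of "\<lambda>x. x \<in> {1..n}" "\<lambda>x. meas ?s (Lball n x 1) / ?s x"] by simp
    show "{meas ?s (Lball n x 1) / ?s x | x. x \<in> {1..n}} \<noteq> {}" using False by auto
    fix a assume "a \<in> {meas ?s (Lball n x 1) / ?s x | x. x \<in> {1..n}}"
    then obtain x where x: "x \<in> {1..n}" and a: "a = meas ?s (Lball n x 1) / ?s x" by blast
    have x': "n + 1 - x \<in> {1..n}" using x by (rule refl_mem)
    have "a = (meas mu (Lball n x 1) + meas mu (Lball n (n+1-x) 1)) / (mu x + mu (n+1-x))"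
      using a meas_sym[OF x] by (simp add: sym_measure_def)
    also have "\<dots> \<le> max (meas mu (Lball n x 1) / mu x) (meas mu (Lball n (n+1-x) 1) / mu (n+1-x))"
      using mediant pos x x' by blast
    also have "\<dots> \<le> Max S"
      using Max_ge[OF finS memS[OF x]] Max_ge[OF finS memS[OF x']] by simp
    finally show "a \<le> Max S" .
  qed
  define T where "T = {meas mu (Lball n x (2*k+1)) / meas mu (Lball n x k) | x k. x \<in> {1..n}}"
  define B where "B = (\<Sum>y\<in>{1..n}. meas mu {1..n} / mu y)"
  have bdd: "bdd_above T" unfolding bdd_above_def
  proof (intro exI ballI)
    fix t assume "t \<in> T"
    then obtain x k where x: "x \<in> {1..n}" and t: "t = meas mu (Lball n x (2*k+1)) / meas mu (Lball n x k)"
      unfolding T_def by blast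
    have mx: "mu x > 0" using pos x by auto
    have "t \<le> meas mu {1..n} / meas mu (Lball n x k)"
      unfolding t by (rule divide_right_mono[OF meas_le_total[OF pos]]) (use meas_pos(2)[OF pos x, of k] in linarith)
    also have "\<dots> \<le> meas mu {1..n} / mu x"
      apply (rule divide_left_mono)
      using meas_pos[OF pos x, of k] mx
        meas_le_total[OF pos, of x k] by auto
    also have "\<dots> \<le> B" unfolding B_def
      apply (rule member_le_sum[OF x])
      using pos meas_le_total[OF pos, of x k] meas_pos[OF pos x, of k] meas_pos[OF pos, of _ k]
      by (auto intro!: divide_nonneg_pos)
    finally show "t \<le> B" .
  qed
  have memT: "meas mu (Lball n x (2*k+1)) / meas mu (Lball n x k) \<in> T" if "x \<in> {1..n}" for x k
    using that unfolding T_def by blast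
  have D: "doubling_const n ?s \<le> doubling_const n mu"
    unfolding doubling_const_def T_def[symmetric]
  proof (rule cSup_least)
    show "{meas ?s (Lball n x (2*k+1)) / meas ?s (Lball n x k) | x k. x \<in> {1..n}} \<noteq> {}"
    proof -
      have "meas ?s (Lball n 1 (2*0+1)) / meas ?s (Lball n 1 0) \<in> {meas ?s (Lball n x (2*k+1)) / meas ?s (Lball n x k) | x k. x \<in> {1..n}}"
      proof -
        have "(1::nat) \<in> {1..n}" using False by simp
        then show ?thesis by (intro CollectI exI[of _ 1] exI[of _ 0] conjI refl)
      qed
      then show ?thesis by blast
    qed
    fix a assume "a \<in> {meas ?s (Lball n x (2*k+1)) / meas ?s (Lball n x k) | x k. x \<in> {1..n}}"
    then obtain x k where x: "x \<in> {1..n}" and a: "a = meas ?s (Lball n x (2*k+1)) / meas ?s (Lball n x k)" by blast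
    have x': "n + 1 - x \<in> {1..n}" using x by (rule refl_mem)
    have "a = (meas mu (Lball n x (2*k+1)) + meas mu (Lball n (n+1-x) (2*k+1))) /
              (meas mu (Lball n x k) + meas mu (Lball n (n+1-x) k))"
      using a meas_sym[OF x] by simp
    also have "\<dots> \<le> max (meas mu (Lball n x (2*k+1)) / meas mu (Lball n x k))
                        (meas mu (Lball n (n+1-x) (2*k+1)) / meas mu (Lball n (n+1-x) k))"
      using mediant meas_pos(2)[OF pos x] meas_pos(2)[OF pos x'] by blast
    also have "\<dots> \<le> Sup T"
      using cSup_upper[OF memT[OF x] bdd] cSup_upper[OF memT[OF x'] bdd] by simp
    finally show "a \<le> Sup T" .
  qed
  show ?thesis using L D by simp
qed

end
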